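(* Let $\mathcal O$ be an order in a definite quaternion algebra $H$ over $\mathbb Q$. Then $e_d=0$ unless $d\equiv0\pmod{\omega(\mathcal O)}$.
   Context: $N$, $\mathrm{tr}$ reduced norm and trace; $\Delta(x)=\mathrm{tr}(x)^2-4N(x)$; $\omega(\mathcal O)=\gcd\{\Delta(x):x\in\mathcal O\}$ (positive). Left $\mathcal O$-ideals: lattices $\mathfrak a$ with $\mathfrak a\otimes\mathbb Z_q=\mathcal O_qx_q$, $x_q\in H_q^\times$, for all $q$; $\mathcal O_r(\mathfrak a)=\{x\in H:\mathfrak ax\subseteq\mathfrak a\}$; classes $[\mathfrak a]$ modulo $\mathfrak a\sim\mathfrak ax$, $x\in H^\times$; height pairing $\langle[\mathfrak a],[\mathfrak b]\rangle=\frac12\#\{x\in H^\times:\mathfrak ax=\mathfrak b\}$, $[\mathfrak a]^\vee=[\mathfrak a]/\langle[\mathfrak a],[\mathfrak a]\rangle$. For $d\ge0$ with $-d\equiv0,1\pmod 4$, $a_d([\mathfrak a])$ is the number of $\mathbb Z$-translation orbits of $\{x\in\mathcal O_r(\mathfrak a):\Delta(x)=-d\}$, $a_d=0$ otherwise; $e_d=\sum_{[\mathfrak a]}a_d([\mathfrak a])[\mathfrak a]^\vee$. *)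

theory Defs
  imports Complex_Main "HOL-Computational_Algebra.Primes"
begin

text \<open>The quaternion algebra H = (a,b)_Q over Q with basis 1,i,j,k,
  i^2 = a, j^2 = b, ij = -ji = k.  Elements are coordinate vectors.\<close>

datatype quat = Quat rat rat rat rat

fun qadd :: "quat \<Rightarrow> quat \<Rightarrow> quat" where
  "qadd (Quat x0 x1 x2 x3) (Quat y0 y1 y2 y3) = Quat (x0+y0) (x1+y1) (x2+y2) (x3+y3)"

fun qscal :: "rat \<Rightarrow> quat \<Rightarrow> quat" where
  "qscal c (Quat x0 x1 x2 x3) = Quat (c*x0) (c*x1) (c*x2) (c*x3)"

definition qzero :: quat where "qzero = Quat 0 0 0 0"
definition qone :: quat where "qone = Quat 1 0 0 0"
definition qof_int :: "int \<Rightarrow> quat" where "qof_int n = Quat (of_int n) 0 0 0"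

fun qmul :: "rat \<Rightarrow> rat \<Rightarrow> quat \<Rightarrow> quat \<Rightarrow> quat" where
  "qmul a b (Quat x0 x1 x2 x3) (Quat y0 y1 y2 y3) =
     Quat (x0*y0 + a*x1*y1 + b*x2*y2 - a*b*x3*y3)
          (x0*y1 + x1*y0 - b*x2*y3 + b*x3*y2)
          (x0*y2 + x2*y0 + a*x1*y3 - a*x3*y1)
          (x0*y3 + x3*y0 + x1*y2 - x2*y1)"

fun qtr :: "quat \<Rightarrow> rat" where "qtr (Quat x0 x1 x2 x3) = 2*x0"
fun qnrm :: "rat \<Rightarrow> rat \<Rightarrow> quat \<Rightarrow> rat" where
  "qnrm a b (Quat x0 x1 x2 x3) = x0^2 - a*x1^2 - b*x2^2 + a*b*x3^2"
definition qdisc :: "rat \<Rightarrow> rat \<Rightarrow> quat \<Rightarrow> rat" where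
  "qdisc a b x = (qtr x)^2 - 4 * qnrm a b x"

definition definite_quat_alg :: "rat \<Rightarrow> rat \<Rightarrow> bool" where
  "definite_quat_alg a b \<longleftrightarrow> a \<noteq> 0 \<and> b \<noteq> 0 \<and> (\<forall>x. x \<noteq> qzero \<longrightarrow> qnrm a b x > 0)"

definition lincomb :: "(nat \<Rightarrow> rat) \<Rightarrow> (nat \<Rightarrow> quat) \<Rightarrow> quat" where
  "lincomb c v = qadd (qadd (qadd (qscal (c 0) (v 0)) (qscal (c 1) (v 1)))
                            (qscal (c 2) (v 2))) (qscal (c 3) (v 3))"

definition is_lattice :: "quat set \<Rightarrow> bool" where
  "is_lattice L \<longleftrightarrow> (\<exists>v. (\<forall>c. lincomb c v = qzero \<longrightarrow> (\<forall>i<4. c i = 0)) \<and>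
                        L = {lincomb (\<lambda>i. of_int (n i)) v | n. True})"

definition is_order :: "rat \<Rightarrow> rat \<Rightarrow> quat set \<Rightarrow> bool" where
  "is_order a b Ord \<longleftrightarrow> is_lattice Ord \<and> qone \<in> Ord \<and> (\<forall>x\<in>Ord. \<forall>y\<in>Ord. qmul a b x y \<in> Ord)"

definition qunit :: "rat \<Rightarrow> rat \<Rightarrow> quat \<Rightarrow> bool" where
  "qunit a b x \<longleftrightarrow> (\<exists>y. qmul a b x y = qone \<and> qmul a b y x = qone)"

definition rmul :: "rat \<Rightarrow> rat \<Rightarrow> quat set \<Rightarrow> quat \<Rightarrow> quat set" where
  "rmul a b A x = (\<lambda>y. qmul a b y x) ` A"

text \<open>Localization Z_(q) \<otimes> L = {y/s : y \<in> L, s \<in> Z, q \<not> | s}.\<close>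
definition loc :: "int \<Rightarrow> quat set \<Rightarrow> quat set" where
  "loc q L = {qscal (1 / of_int s) y | s y. y \<in> L \<and> \<not> q dvd s}"

definition left_ideal :: "rat \<Rightarrow> rat \<Rightarrow> quat set \<Rightarrow> quat set \<Rightarrow> bool" where
  "left_ideal a b Ord A \<longleftrightarrow> is_lattice A \<and>
     (\<forall>q::int. prime q \<longrightarrow> (\<exists>x. qunit a b x \<and> loc q A = rmul a b (loc q Ord) x))"

definition right_order :: "rat \<Rightarrow> rat \<Rightarrow> quat set \<Rightarrow> quat set" where
  "right_order a b A = {x. \<forall>y\<in>A. qmul a b y x \<in> A}"

definition ideal_class :: "rat \<Rightarrow> rat \<Rightarrow> quat set \<Rightarrow> quat set \<Rightarrow> quat set set" where
  "ideal_class a b Ord A = {B. left_ideal a b Ord B \<and> (\<exists>x. qunit a b x \<and> B = rmul a b A x)}"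

definition ideal_classes :: "rat \<Rightarrow> rat \<Rightarrow> quat set \<Rightarrow> quat set set set" where
  "ideal_classes a b Ord = {ideal_class a b Ord A | A. left_ideal a b Ord A}"

definition height :: "rat \<Rightarrow> rat \<Rightarrow> quat set \<Rightarrow> quat set \<Rightarrow> rat" where
  "height a b A B = of_nat (card {x. qunit a b x \<and> rmul a b A x = B}) / 2"

definition omega :: "rat \<Rightarrow> rat \<Rightarrow> quat set \<Rightarrow> int" where
  "omega a b Ord = Gcd {k. \<exists>x\<in>Ord. qdisc a b x = of_int k}"

definition a_coef :: "rat \<Rightarrow> rat \<Rightarrow> nat \<Rightarrow> quat set \<Rightarrow> nat" where
  "a_coef a b d A =
    (if d mod 4 = 0 \<or> d mod 4 = 3 then
       (let S = {x \<in> right_order a b A. qdisc a b x = - of_nat d}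
        in card (S // {(x,y). x \<in> S \<and> y \<in> S \<and> (\<exists>n. y = qadd x (qof_int n))}))
     else 0)"

text \<open>e_d = \<Sum>_[A] a_d([A]) [A]^\<vee>, with [A]^\<vee> = [A]/\<langle>[A],[A]\<rangle>, represented by its
  coefficient function on ideal classes (zero off the set of classes).\<close>
definition e_vec :: "rat \<Rightarrow> rat \<Rightarrow> quat set \<Rightarrow> nat \<Rightarrow> quat set set \<Rightarrow> rat" where
  "e_vec a b Ord d C =
    (if C \<in> ideal_classes a b Ord then
       (let A = (SOME A. A \<in> C) in of_nat (a_coef a b d A) / height a b A A)
     else 0)"

end

theory Submission imports Defs begin
lemma qnrm_mult0: "qnrm a b (qmul a b (Quat x0 x1 x2 x3) (Quat y0 y1 y2 y3)) = qnrm a b (Quat x0 x1 x2 x3) * qnrm a b (Quat y0 y1 y2 y3)"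
  apply (simp only: qmul.simps qnrm.simps)
  apply algebra done
lemma qmul_assoc0: "qmul a b (qmul a b (Quat x0 x1 x2 x3) (Quat y0 y1 y2 y3)) (Quat z0 z1 z2 z3) = qmul a b (Quat x0 x1 x2 x3) (qmul a b (Quat y0 y1 y2 y3) (Quat z0 z1 z2 z3))"
  apply (simp only: qmul.simps quat.inject)
  apply (intro conjI; algebra) done
lemma qmul_assoc: "qmul a b (qmul a b x y) z = qmul a b x (qmul a b y z)"
  by (cases x; cases y; cases z; hypsubst; rule qmul_assoc0)
lemma qnrm_mult: "qnrm a b (qmul a b x y) = qnrm a b x * qnrm a b y"
  by (cases x; cases y; hypsubst; rule qnrm_mult0)
lemma qmul_one_l[simp]: "qmul a b qone x = x" by (cases x) (simp add: qone_def)
lemma qmul_one_r[simp]: "qmul a b x qone = x" by (cases x) (simp add: qone_def)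
lemma qtr_comm: "qtr (qmul a b x y) = qtr (qmul a b y x)"
  by (cases x; cases y) (simp add: algebra_simps)
lemma qscal_mul: "qmul a b (qscal c x) y = qscal c (qmul a b x y)"
  by (cases x; cases y) (simp add: algebra_simps)
lemma qscal_one[simp]: "qscal 1 x = x" by (cases x) simp
lemma qdisc_scal: "qdisc a b (qscal c x) = c^2 * qdisc a b x"
  by (cases x) (simp add: qdisc_def algebra_simps power2_eq_square)
lemma nt:
  fixes w d :: int
  assumes "\<And>q. prime q \<Longrightarrow> \<exists>s. \<not> q dvd s \<and> w dvd d * s^2"
  shows "w dvd d"
proof (cases "w = 0")
  case True
  obtain s where "\<not> (2::int) dvd s" "w dvd d * s^2" using assms[of 2] by auto
  then show ?thesis using True by auto
next
  case False
  define g where "g = gcd w d"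
  have gnz: "gcd w d \<noteq> 0" using False by simp
  obtain w' d' where w': "w = w' * g" and d': "d = d' * g" and cop: "coprime w' d'"
    using gcd_coprime_exists[OF gnz] unfolding g_def by blast
  have "is_unit w'"
  proof (rule ccontr)
    assume nu: "\<not> is_unit w'"
    have "w' \<noteq> 0" using False w' by auto
    then obtain q where q: "prime q" "q dvd w'" using prime_divisor_exists nu by blast
    then obtain s where s: "\<not> q dvd s" "w dvd d * s^2" using assms by blast
    have gz: "g \<noteq> 0" using gnz g_def by simp
    have "w' * g dvd (d' * s^2) * g" using s(2) w' d' by (simp add: ac_simps)
    hence "w' dvd d' * s^2" using gz by simp
    hence "w' dvd s^2" using cop by (simp add: coprime_dvd_mult_right_iff)
    hence "q dvd s^2" using q(2) dvd_trans by blast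
    hence "q dvd s" using q(1) prime_dvd_power by blast
    thus False using s(1) by simp
  qed
  hence "w dvd g" using w' by (simp add: mult_unit_dvd_iff)
  thus ?thesis unfolding g_def by simp
qed

lemma core:
  assumes li: "left_ideal a b Ord A" and y: "y \<in> right_order a b A" and q: "prime q"
    and ord: "qone \<in> Ord"
  shows "\<exists>z\<in>Ord. \<exists>s. \<not> q dvd s \<and> qdisc a b z = qdisc a b y * (of_int s)^2"
proof -
  obtain x where xu: "qunit a b x" and lx: "loc q A = rmul a b (loc q Ord) x"
    using li q unfolding left_ideal_def by blast
  obtain x' where xx': "qmul a b x x' = qone" "qmul a b x' x = qone" using xu qunit_def by blast
  have "\<not> q dvd 1" using q not_prime_unit by blast
  hence "qscal (1 / of_int 1) qone \<in> loc q Ord" unfolding loc_def using ord by blast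
  hence "x \<in> loc q A" unfolding lx rmul_def by force
  then obtain s0 a0 where a0: "x = qscal (1 / of_int s0) a0" "a0 \<in> A" "\<not> q dvd s0"
    unfolding loc_def by blast
  have "qmul a b a0 y \<in> A" using y a0(2) unfolding right_order_def by blast
  hence "qmul a b x y \<in> loc q A" unfolding loc_def using a0 by (auto simp: qscal_mul)
  then obtain w where w: "w \<in> loc q Ord" "qmul a b x y = qmul a b w x"
    using lx unfolding rmul_def by auto
  then obtain s z where z: "w = qscal (1 / of_int s) z" "z \<in> Ord" "\<not> q dvd s"
    unfolding loc_def by blast
  have yeq: "y = qmul a b x' (qmul a b w x)"
    by (metis w(2) qmul_assoc xx'(2) qmul_one_l)
  have "qtr y = qtr w"
    by (metis yeq qtr_comm qmul_assoc xx'(1) qmul_one_r)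
  moreover have "qnrm a b y = qnrm a b w"
  proof -
    have "qnrm a b y = qnrm a b x' * (qnrm a b w * qnrm a b x)" using yeq qnrm_mult by metis
    also have "\<dots> = qnrm a b w * qnrm a b (qmul a b x' x)" by (simp add: qnrm_mult)
    also have "\<dots> = qnrm a b w" using xx'(2) by (simp add: qone_def)
    finally show ?thesis .
  qed
  ultimately have "qdisc a b y = qdisc a b w" unfolding qdisc_def by simp
  also have "\<dots> = (1 / of_int s)^2 * qdisc a b z" using z(1) qdisc_scal by simp
  finally have "qdisc a b z = qdisc a b y * (of_int s)^2"
    using z(3) by (auto simp: field_simps)
  thus ?thesis using z by blast
qed
lemma rmul_one: "rmul a b A qone = A" unfolding rmul_def by simp

lemma qunit_one: "qunit a b qone" unfolding qunit_def by (rule exI[of _ qone]) simp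

lemma a_coef_zero:
  assumes ord: "qone \<in> Ord" and li: "left_ideal a b Ord A"
    and nd: "\<not> (omega a b Ord dvd int d)"
  shows "a_coef a b d A = 0"
proof -
  have "{x \<in> right_order a b A. qdisc a b x = - of_nat d} = {}"
  proof (rule ccontr)
    assume "{x \<in> right_order a b A. qdisc a b x = - of_nat d} \<noteq> {}"
    then obtain y where y: "y \<in> right_order a b A" "qdisc a b y = - of_nat d" by blast
    have "omega a b Ord dvd int d"
    proof (rule nt)
      fix q :: int assume q: "prime q"
      obtain z s where z: "z \<in> Ord" "\<not> q dvd s" "qdisc a b z = qdisc a b y * (of_int s)^2"
        using core[OF li y(1) q ord] by blast
      have "qdisc a b z = of_int (- (int d * s^2))" using z(3) y(2) by simp
      hence "- (int d * s^2) \<in> {k. \<exists>x\<in>Ord. qdisc a b x = of_int k}" using z(1) by blast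
      hence "omega a b Ord dvd - (int d * s^2)" unfolding omega_def by (rule Gcd_dvd)
      thus "\<exists>s. \<not> q dvd s \<and> omega a b Ord dvd int d * s^2" using z(2) by auto
    qed
    thus False using nd by simp
  qed
  then show ?thesis unfolding a_coef_def Let_def by (simp only: quotient_empty card.empty if_cancel)
qed

theorem corollary1:
  fixes a b :: rat and Ord :: "quat set" and d :: nat
  assumes "definite_quat_alg a b"
    and "is_order a b Ord"
    and "\<not> (omega a b Ord dvd int d)"
  shows "e_vec a b Ord d = (\<lambda>C. 0)"
proof
  fix C
  have ord: "qone \<in> Ord" using assms(2) is_order_def by blast
  show "e_vec a b Ord d C = 0"
  proof (cases "C \<in> ideal_classes a b Ord")
    case False thus ?thesis unfolding e_vec_def by simp
  next
    case True
    then obtain A0 where A0: "left_ideal a b Ord A0" "C = ideal_class a b Ord A0"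
      unfolding ideal_classes_def by blast
    have "A0 \<in> C" unfolding A0(2) ideal_class_def 
    proof (intro CollectI conjI exI)
      show "left_ideal a b Ord A0" by (rule A0(1))
      show "qunit a b qone" by (rule qunit_one)
      show "A0 = rmul a b A0 qone" by (simp add: rmul_one)
    qed
    hence "(SOME A. A \<in> C) \<in> C" by (rule someI)
    hence "left_ideal a b Ord (SOME A. A \<in> C)" unfolding A0(2) ideal_class_def by blast
    hence "a_coef a b d (SOME A. A \<in> C) = 0" using a_coef_zero ord assms(3) by blast
    thus ?thesis unfolding e_vec_def Let_def using True by simp
  qed
qed

end
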